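(* Let $0<q<1$, $0\le p<1$, $z\in\mathbb C$ and $t\in\mathbb C$ with $|t|<1$. Then \[ \sum_{n=0}^\infty\frac{(p;q)_n}{(q;q)_n} \biggl(\sum_{k=0}^n\begin{bmatrix}n\\k\end{bmatrix}_q \frac{q^{k^2+k/2}}{(p;q)_k}z^k\biggr) t^n= \frac{(pt;q)_\infty}{(t;q)_\infty} \sum_{n=0}^\infty\frac{q^{n^2+n/2}}{(pt;q)_n(q;q)_n}(zt)^n . \]
   Context: For $a\in\mathbb C$ and $n\in\{0,1,2,\dots\}\cup\{\infty\}$, $(a;q)_n=\prod_{k=1}^n(1-aq^{k-1})$ (empty product $=1$). The Gaussian $q$-binomial coefficient is $\begin{bmatrix}n\\k\end{bmatrix}_q=\frac{(q;q)_n}{(q;q)_k(q;q)_{n-k}}$. *)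

theory Defs
  imports "HOL-Analysis.Analysis"
begin

definition qpoch :: "complex \<Rightarrow> complex \<Rightarrow> nat \<Rightarrow> complex" where
  "qpoch a q n = (\<Prod>k=1..n. (1 - a * q ^ (k - 1)))"

definition qpoch_inf :: "complex \<Rightarrow> complex \<Rightarrow> complex" where
  "qpoch_inf a q = lim (\<lambda>n. qpoch a q n)"

definition qbinom :: "complex \<Rightarrow> nat \<Rightarrow> nat \<Rightarrow> complex" where
  "qbinom q n k = qpoch q q n / (qpoch q q k * qpoch q q (n - k))"

end

theory Submission
  imports Defs
begin

lemma qpoch_0[simp]: "qpoch a q 0 = 1" by (simp add: qpoch_def)

lemma qpoch_Suc: "qpoch a q (Suc n) = qpoch a q n * (1 - a * q ^ n)"
  by (simp add: qpoch_def atLeastAtMostSuc_conv mult.commute)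

lemma qpoch_add: "qpoch a q (k + m) = qpoch a q k * qpoch (a * q^k) q m"
  by (induction m) (simp_all add: qpoch_Suc power_add mult.assoc)

lemma qpoch_Suc_prod: "qpoch a q (Suc n) = (\<Prod>i\<le>n. 1 - a * q^i)"
  by (induction n) (simp_all add: qpoch_Suc)

lemma norm_aq:
  fixes a :: complex and q :: real
  assumes "0 < q" "q < 1" "norm a < 1"
  shows "norm (a * of_real q ^ n) < 1"
proof -
  have "q ^ n \<le> 1" using assms by (simp add: power_le_one)
  hence "norm a * q ^ n \<le> norm a" by (simp add: mult_left_le)
  thus ?thesis using assms by (simp add: norm_mult norm_power)
qed

lemma qpoch_nz:
  fixes a :: complex and q :: real
  assumes "0 < q" "q < 1" "norm a < 1"
  shows "qpoch a (of_real q) n \<noteq> 0"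
proof (induction n)
  case (Suc n)
  have "norm (a * of_real q ^ n) < 1"
    using assms by (rule norm_aq)
  hence "1 - a * of_real q ^ n \<noteq> 0" by auto
  with Suc show ?case by (simp add: qpoch_Suc)
qed simp

lemma qpoch_conv:
  fixes a :: complex and q :: real
  assumes "0 < q" "q < 1" "norm a < 1"
  shows "(\<lambda>n. qpoch a (of_real q) n) \<longlonglongrightarrow> qpoch_inf a (of_real q) \<and> qpoch_inf a (of_real q) \<noteq> 0"
proof -
  define f where "f i = 1 - a * of_real q ^ i" for i
  have "summable (\<lambda>i. norm a * q ^ i)"
    using assms by (intro summable_mult summable_geometric) auto
  moreover have "norm (f i - 1) = norm a * q ^ i" for i
    using assms by (simp add: f_def norm_mult norm_power)
  ultimately have "summable (\<lambda>i. norm (f i - 1))" by simp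
  hence cp: "convergent_prod f"
    by (intro abs_convergent_prod_imp_convergent_prod) (simp add: abs_convergent_prod_conv_summable)
  have nz: "f i \<noteq> 0" for i
  proof -
    have "norm (a * of_real q ^ i) < 1"
      using assms by (rule norm_aq)
    thus ?thesis unfolding f_def by auto
  qed
  have eq: "qpoch a (of_real q) (Suc n) = (\<Prod>i\<le>n. f i)" for n
    unfolding f_def by (rule qpoch_Suc_prod)
  have "(\<lambda>n. qpoch a (of_real q) (Suc n)) \<longlonglongrightarrow> prodinf f"
    unfolding eq by (rule convergent_prod_LIMSEQ[OF cp])
  hence L: "(\<lambda>n. qpoch a (of_real q) n) \<longlonglongrightarrow> prodinf f"
    by (rule LIMSEQ_imp_Suc)
  hence "qpoch_inf a (of_real q) = prodinf f" unfolding qpoch_inf_def by (rule limI)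
  with L prodinf_nonzero[OF cp nz] show ?thesis by simp
qed

lemma qpoch_shift:
  fixes a :: complex and q :: real
  assumes "0 < q" "q < 1" "norm a < 1"
  shows "qpoch_inf (a * of_real q ^ k) (of_real q) = qpoch_inf a (of_real q) / qpoch a (of_real q) k"
proof -
  have na: "norm (a * of_real q ^ k) < 1"
    using assms by (rule norm_aq)
  have "(\<lambda>m. qpoch a (of_real q) (m + k)) \<longlonglongrightarrow> qpoch_inf a (of_real q)"
    using qpoch_conv[OF assms] by (intro LIMSEQ_ignore_initial_segment) auto
  moreover have "(\<lambda>m. qpoch a (of_real q) (m + k)) = (\<lambda>m. qpoch a (of_real q) k * qpoch (a * of_real q ^ k) (of_real q) m)"
    by (rule ext) (metis add.commute qpoch_add)
  ultimately have "(\<lambda>m. qpoch a (of_real q) k * qpoch (a * of_real q ^ k) (of_real q) m) \<longlonglongrightarrow> qpoch_inf a (of_real q)"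
    by simp
  moreover have "(\<lambda>m. qpoch a (of_real q) k * qpoch (a * of_real q ^ k) (of_real q) m) \<longlonglongrightarrow> qpoch a (of_real q) k * qpoch_inf (a * of_real q ^ k) (of_real q)"
    using qpoch_conv[OF assms(1,2) na] by (intro tendsto_mult_left) auto
  ultimately have "qpoch_inf a (of_real q) = qpoch a (of_real q) k * qpoch_inf (a * of_real q ^ k) (of_real q)"
    using LIMSEQ_unique by blast
  thus ?thesis using qpoch_nz[OF assms] by (simp add: field_simps)
qed

lemma qpoch_of_real: "qpoch (of_real a) (of_real q) m = of_real (\<Prod>k=1..m. 1 - a * q^(k-1))"
  by (simp add: qpoch_def)

lemma qpoch_real_le1:
  fixes a q :: real
  assumes "0 < q" "q < 1" "0 \<le> a" "a \<le> 1"
  shows "norm (qpoch (of_real a) (of_real q) m) \<le> 1"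
proof -
  have f: "0 \<le> 1 - a * q^(k-1) \<and> 1 - a * q^(k-1) \<le> 1" for k
    using assms by (auto simp: mult_le_one power_le_one)
  have "(\<Prod>k=1..m. 1 - a * q^(k-1)) \<le> 1" "0 \<le> (\<Prod>k=1..m. 1 - a * q^(k-1))"
    using f by (auto intro: prod_le_1 prod_nonneg)
  thus ?thesis unfolding qpoch_of_real norm_of_real by simp
qed

lemma exp_factor_bound:
  fixes x q :: real
  assumes "0 \<le> x" "x \<le> q" "q < 1"
  shows "exp (- (x / (1 - q))) \<le> 1 - x"
proof -
  have x1: "x < 1" using assms by simp
  have "1 / (1 - x) = 1 + x / (1 - x)" using x1 by (simp add: field_simps)
  also have "\<dots> \<le> exp (x / (1 - x))" by (rule exp_ge_add_one_self)
  also have "\<dots> \<le> exp (x / (1 - q))"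
    using assms by (intro exp_le_cancel_iff[THEN iffD2] divide_left_mono) auto
  finally have "1 / (1 - x) \<le> exp (x / (1 - q))" .
  hence "1 / exp (x / (1 - q)) \<le> 1 - x"
    using x1 by (simp add: field_simps)
  thus ?thesis by (simp add: exp_minus field_simps)
qed

lemma qpoch_qq_lower:
  fixes q :: real
  assumes "0 < q" "q < 1"
  shows "exp (- (1 / (1 - q)^2)) \<le> norm (qpoch (of_real q) (of_real q) m)"
proof -
  have fac: "exp (- (q^k / (1 - q))) \<le> 1 - q * q^(k-1)" if "k \<in> {1..m}" for k
  proof -
    have "q * q^(k-1) = q^k" using that by (cases k) auto
    moreover have "q^k \<le> q" using power_decreasing[of 1 k q] that assms by simp
    ultimately show ?thesis using exp_factor_bound[of "q^k" q] assms by simp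
  qed
  have "(\<Prod>k=1..m. exp (- (q^k / (1 - q)))) \<le> (\<Prod>k=1..m. 1 - q * q^(k-1))"
    by (rule prod_mono) (use fac in auto)
  moreover have "(\<Prod>k=1..m. exp (- (q^k / (1 - q)))) = exp (- (\<Sum>k=1..m. q^k) / (1 - q))"
    by (simp add: exp_sum[symmetric] sum_divide_distrib sum_negf)
  moreover have "exp (- (1 / (1 - q)^2)) \<le> exp (- (\<Sum>k=1..m. q^k) / (1 - q))"
  proof -
    have "(\<Sum>k=1..m. q^k) \<le> (\<Sum>k<Suc m. q^k)"
      by (rule sum_mono2) (use assms in auto)
    also have "\<dots> = (1 - q^Suc m) / (1 - q)" using assms by (subst sum_gp_strict) simp
    also have "\<dots> \<le> 1 / (1 - q)" using assms by (simp add: divide_right_mono)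
    finally have "(\<Sum>k=1..m. q^k) / (1 - q) \<le> (1 / (1 - q)) / (1 - q)"
      using assms by (intro divide_right_mono) auto
    also have "(1 / (1 - q)) / (1 - q) = 1 / (1 - q)^2" by (simp add: power2_eq_square)
    finally show ?thesis by simp
  qed
  moreover have "0 \<le> (\<Prod>k=1..m. 1 - q * q^(k-1))"
    using assms by (intro prod_nonneg) (auto simp: mult_le_one power_le_one)
  ultimately show ?thesis unfolding qpoch_of_real norm_of_real by linarith
qed


lemma qbinomial:
  fixes q a :: real and x :: complex
  assumes q0: "0 < q" and q1: "q < 1" and a0: "0 \<le> a" and a1: "a \<le> 1" and x1: "norm x < 1"
  shows "(\<lambda>m. qpoch (of_real a) (of_real q) m / qpoch (of_real q) (of_real q) m * x^m)
           sums (qpoch_inf (of_real a * x) (of_real q) / qpoch_inf x (of_real q))"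
proof -
  define Q :: complex where "Q = of_real q"
  define A :: complex where "A = of_real a"
  define u where "u m = qpoch A Q m / qpoch Q Q m" for m
  define F where "F y = (\<Sum>m. u m * y^m)" for y
  define \<delta> where "\<delta> = exp (- (1 / (1 - q)^2))"
  have d0: "\<delta> > 0" by (simp add: \<delta>_def)
  have QQlow: "\<delta> \<le> norm (qpoch Q Q m)" for m unfolding \<delta>_def Q_def by (rule qpoch_qq_lower[OF q0 q1])
  have QQnz: "qpoch Q Q m \<noteq> 0" for m using QQlow[of m] d0 by auto
  have nQ: "norm Q < 1" "norm Q = q" using q0 q1 by (auto simp: Q_def)
  have nA: "norm A \<le> 1" using a0 a1 by (simp add: A_def)
  have ubound: "norm (u m) \<le> 1 / \<delta>" for m
  proof -
    have "norm (qpoch A Q m) \<le> 1" unfolding A_def Q_def by (rule qpoch_real_le1) (use assms in auto)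
    hence "norm (u m) \<le> 1 / norm (qpoch Q Q m)" by (simp add: u_def norm_divide divide_right_mono)
    also have "\<dots> \<le> 1 / \<delta>" using QQlow[of m] d0 by (intro divide_left_mono mult_pos_pos) auto
    finally show ?thesis .
  qed
  have summ: "summable (\<lambda>m. norm (u m * y^m))" if "norm y < 1" for y
  proof -
    have "summable (\<lambda>m. 1/\<delta> * norm y ^ m)" using that by (intro summable_mult summable_geometric) auto
    moreover have "norm (norm (u m * y^m)) \<le> 1/\<delta> * norm y ^ m" for m
      using mult_right_mono[OF ubound[of m], of "norm y ^ m"] by (simp add: norm_mult norm_power)
    ultimately show ?thesis by (rule summable_comparison_test'[where N=0]) 
  qed
  have sums: "(\<lambda>m. u m * y^m) sums F y" if "norm y < 1" for y
    unfolding F_def using summable_norm_cancel[OF summ[OF that]] by (rule summable_sums)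
  have rec: "u (Suc m) * (1 - Q^Suc m) = u m * (1 - A * Q^m)" for m
  proof -
    have "norm (Q^Suc m) < 1" unfolding norm_power nQ(2) using q0 q1 by (rule power_Suc_less_one)
    hence "1 - Q^Suc m \<noteq> 0" by auto
    thus ?thesis using QQnz[of m] unfolding u_def qpoch_Suc by (simp add: field_simps)
  qed
  have feq: "F y - F (Q*y) = y * (F y - A * F (Q*y))" if "norm y < 1" for y
  proof -
    have "norm (y * of_real q ^ 1) < 1" using q0 q1 that by (rule norm_aq)
    hence nQy: "norm (Q*y) < 1" by (simp add: Q_def mult.commute)
    define g where "g m = u m * y^m - u m * (Q*y)^m" for m
    have "g sums (F y - F (Q*y))" unfolding g_def by (intro sums_diff sums that nQy)
    moreover have "g 0 = 0" by (simp add: g_def)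
    ultimately have "(\<lambda>m. g (Suc m)) sums (F y - F (Q*y))" by (simp add: sums_Suc_iff)
    moreover have "g (Suc m) = y * (u m * y^m - A * (u m * (Q*y)^m))" for m
    proof -
      have "g (Suc m) = (u (Suc m) * (1 - Q^Suc m)) * y^Suc m"
        by (simp add: g_def power_mult_distrib algebra_simps)
      also have "\<dots> = u m * (1 - A * Q^m) * y^Suc m" by (simp only: rec)
      finally show ?thesis by (simp add: power_mult_distrib algebra_simps)
    qed
    ultimately have "(\<lambda>m. y * (u m * y^m - A * (u m * (Q*y)^m))) sums (F y - F (Q*y))" by simp
    moreover have "(\<lambda>m. y * (u m * y^m - A * (u m * (Q*y)^m))) sums (y * (F y - A * F (Q*y)))"
      by (intro sums_mult sums_diff sums that nQy)
    ultimately show ?thesis using sums_unique2 by blast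
  qed
  have nQNy: "norm (Q^N * y) < 1" if "norm y < 1" for N y
  proof -
    have "norm (y * of_real q ^ N) < 1" using q0 q1 that by (rule norm_aq)
    thus ?thesis by (simp add: Q_def mult.commute)
  qed
  have iter: "F y * qpoch y Q N = qpoch (A*y) Q N * F (Q^N * y)" if y1: "norm y < 1" for y N
  proof (induction N)
    case 0 then show ?case by simp
  next
    case (Suc N)
    define w where "w = Q^N * y"
    have w1: "norm w < 1" unfolding w_def by (rule nQNy[OF y1])
    have fw: "F w * (1 - w) = F (Q*w) * (1 - A * w)"
      using feq[OF w1] by (simp add: algebra_simps)
    have "F y * qpoch y Q (Suc N) = (F y * qpoch y Q N) * (1 - w)"
      by (simp add: qpoch_Suc w_def mult.commute mult.left_commute)
    also have "\<dots> = qpoch (A*y) Q N * (F w * (1 - w))" using Suc by (simp add: w_def)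
    also have "\<dots> = qpoch (A*y) Q N * (1 - A * w) * F (Q*w)" by (simp add: fw)
    also have "\<dots> = qpoch (A*y) Q (Suc N) * F (Q^Suc N * y)"
      by (simp add: qpoch_Suc w_def mult.commute mult.left_commute)
    finally show ?case .
  qed
  have Fcont: "isCont F 0"
  proof -
    have "summable (\<lambda>n. u n * (1/2 :: complex)^n)"
      by (rule summable_norm_cancel[OF summ]) simp
    hence "isCont (\<lambda>x. \<Sum>n. u n * x^n) 0" by (rule isCont_powser) simp
    thus ?thesis unfolding F_def[abs_def] .
  qed
  have F0: "F 0 = 1" unfolding F_def by (subst powser_zero) (simp add: u_def)
  have lim1: "(\<lambda>N. F (Q^N * x)) \<longlonglongrightarrow> 1"
  proof -
    have "(\<lambda>N. Q^N * x) \<longlonglongrightarrow> 0 * x" by (intro tendsto_mult LIMSEQ_power_zero nQ(1) tendsto_const)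
    hence "(\<lambda>N. Q^N * x) \<longlonglongrightarrow> 0" by simp
    from isCont_tendsto_compose[OF Fcont this] show ?thesis by (simp add: F0)
  qed
  have "norm A * norm x \<le> norm x" using nA by (simp add: mult_left_le_one_le)
  hence nAx: "norm (A*x) < 1" using x1 by (simp add: norm_mult)
  have c1: "(\<lambda>N. qpoch x Q N) \<longlonglongrightarrow> qpoch_inf x Q" "qpoch_inf x Q \<noteq> 0"
    using qpoch_conv[OF q0 q1 x1] by (auto simp: Q_def)
  have c2: "(\<lambda>N. qpoch (A*x) Q N) \<longlonglongrightarrow> qpoch_inf (A*x) Q"
    using qpoch_conv[OF q0 q1 nAx] by (auto simp: Q_def)
  have "(\<lambda>N. F x * qpoch x Q N) \<longlonglongrightarrow> F x * qpoch_inf x Q" by (intro tendsto_mult_left c1)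
  moreover have "(\<lambda>N. F x * qpoch x Q N) \<longlonglongrightarrow> qpoch_inf (A*x) Q * 1"
    unfolding iter[OF x1] by (intro tendsto_mult c2 lim1)
  ultimately have "F x * qpoch_inf x Q = qpoch_inf (A*x) Q" using LIMSEQ_unique by fastforce
  hence "F x = qpoch_inf (A*x) Q / qpoch_inf x Q" using c1(2) by (simp add: field_simps)
  with sums[OF x1] show ?thesis by (simp add: u_def A_def Q_def)
qed


theorem lemma1:
  fixes q p :: real and z t :: complex
  assumes "0 < q" "q < 1" "0 \<le> p" "p < 1" "norm t < 1"
  shows "summable (\<lambda>n. of_real (q powr (real n ^ 2 + real n / 2))
            / (qpoch (of_real p * t) (of_real q) n * qpoch (of_real q) (of_real q) n) * (z * t) ^ n)
    \<and> (\<lambda>n. qpoch (of_real p) (of_real q) n / qpoch (of_real q) (of_real q) n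
          * (\<Sum>k=0..n. qbinom (of_real q) n k * of_real (q powr (real k ^ 2 + real k / 2))
               / qpoch (of_real p) (of_real q) k * z ^ k) * t ^ n)
      sums (qpoch_inf (of_real p * t) (of_real q) / qpoch_inf t (of_real q)
            * (\<Sum>n. of_real (q powr (real n ^ 2 + real n / 2))
                 / (qpoch (of_real p * t) (of_real q) n * qpoch (of_real q) (of_real q) n) * (z * t) ^ n))"
proof -
  have q0: "0 < q" and q1: "q < 1" and p0: "0 \<le> p" and p1: "p < 1" and t1: "norm t < 1"
    using assms by auto
  define cr where "cr k = q powr (real k ^ 2 + real k / 2)" for k :: nat
  define \<delta> where "\<delta> = exp (- (1 / (1 - q)^2))"
  define w where "w = norm z * norm t"
  define QQ where "QQ k = qpoch (of_real q) (of_real q) k" for k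
  have d0: "\<delta> > 0" by (simp add: \<delta>_def)
  have QQlow: "\<delta> \<le> norm (QQ m)" for m unfolding \<delta>_def QQ_def by (rule qpoch_qq_lower[OF q0 q1])
  have QQnz: "QQ m \<noteq> 0" for m using QQlow[of m] d0 by auto
  have np: "norm (complex_of_real p) < 1" using p0 p1 by simp
  have "p * norm t \<le> norm t" using p1 p0 by (simp add: mult_left_le_one_le)
  hence npt: "norm (complex_of_real p * t) < 1" using t1 p0 by (simp add: norm_mult)
  have Pnz: "qpoch (of_real p) (of_real q) k \<noteq> 0" for k by (rule qpoch_nz[OF q0 q1 np])
  have PTnz: "qpoch (of_real p * t) (of_real q) k \<noteq> 0" for k by (rule qpoch_nz[OF q0 q1 npt])
  have I1: "qpoch_inf (of_real p * t) (of_real q) \<noteq> 0" using qpoch_conv[OF q0 q1 npt] by simp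
  have I2: "qpoch_inf t (of_real q) \<noteq> 0" using qpoch_conv[OF q0 q1 t1] by simp
  define C where "C = qpoch_inf (of_real p * t) (of_real q) / qpoch_inf t (of_real q)"
  have Cnz: "C \<noteq> 0" using I1 I2 by (simp add: C_def)
  define G where "G n = of_real (q powr (real n ^ 2 + real n / 2))
                 / (qpoch (of_real p * t) (of_real q) n * qpoch (of_real q) (of_real q) n) * (z * t) ^ n" for n
  define f where "f = (\<lambda>(k,m). (of_real (cr k) * (z*t)^k * inverse (QQ k)) *
                       (qpoch (of_real (p * q^k)) (of_real q) m * inverse (QQ m) * t^m))"
  define g where "g = (\<lambda>(k::nat,m::nat). (cr k * w^k / \<delta>) * (norm t ^ m / \<delta>))"
  have cr0: "0 \<le> cr k" for k by (simp add: cr_def)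
  have w0: "0 \<le> w" by (simp add: w_def)
  have crsum: "summable (\<lambda>k. cr k * w^k)"
  proof -
    obtain N where N: "q^N < 1 / (2 * (w + 1))"
      using real_arch_pow_inv[of "1 / (2 * (w + 1))" q] w0 q1 by auto
    have "q^N * w \<le> q^N * (w+1)" using q0 by simp
    also have "\<dots> < 1/2" using N w0 by (simp add: field_simps)
    finally have qNw: "q^N * w < 1/2" .
    have bnd: "norm (cr k * w^k) \<le> (1/2)^k" if "N \<le> k" for k
    proof -
      have "cr k \<le> q powr (real (k*k))"
        unfolding cr_def using q0 q1 by (intro powr_mono') (auto simp: power2_eq_square)
      also have "\<dots> = (q^k)^k" using powr_realpow[OF q0, of "k*k"] by (simp only: power_mult)
      finally have "cr k * w^k \<le> (q^k)^k * w^k" using w0 by (simp add: mult_right_mono)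
      also have "\<dots> = (q^k * w)^k" by (simp add: power_mult_distrib)
      also have "\<dots> \<le> (1/2)^k"
      proof (rule power_mono)
        have "q^k \<le> q^N" using that q0 q1 by (simp add: power_decreasing)
        hence "q^k * w \<le> q^N * w" using w0 by (simp add: mult_right_mono)
        thus "q^k * w \<le> 1/2" using qNw by simp
        show "0 \<le> q^k * w" using q0 w0 by simp
      qed
      finally show ?thesis using cr0[of k] w0 by simp
    qed
    have gs: "summable (\<lambda>k. (1/2::real)^k)" by (rule summable_geometric) simp
    show ?thesis by (rule summable_comparison_test'[OF gs bnd])
  qed
  have invb: "norm (inverse (QQ j)) \<le> 1/\<delta>" for j
    using le_imp_inverse_le[OF QQlow[of j] d0] by (simp add: norm_inverse inverse_eq_divide norm_divide)
  have qpb: "norm (qpoch (of_real (p * q^k)) (of_real q) m) \<le> 1" for k m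
  proof (rule qpoch_real_le1[OF q0 q1])
    show "0 \<le> p * q^k" using p0 q0 by simp
    have "q^k \<le> 1" using q0 q1 by (simp add: power_le_one)
    thus "p * q^k \<le> 1" using p0 p1 q0 by (intro mult_le_one) auto
  qed
  have qpb': "norm (qpoch (of_real p * of_real q ^ k) (of_real q) m) \<le> 1" for k m
    using qpb[of k m] by simp
  have fbound: "norm (f x) \<le> g x" for x
  proof -
    obtain k m where x: "x = (k,m)" by (cases x)
    have e1: "norm (of_real (cr k) * (z*t)^k) \<le> cr k * w^k"
      using cr0[of k] by (simp add: norm_mult norm_power w_def power_mult_distrib)
    have "norm (f x) = (norm (of_real (cr k) * (z*t)^k) * norm (inverse (QQ k))) *
            (norm (qpoch (of_real (p * q^k)) (of_real q) m) * norm (inverse (QQ m)) * norm (t^m))"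
      unfolding x f_def by (simp add: norm_mult)
    also have "\<dots> \<le> (cr k * w^k * (1/\<delta>)) * (1 * (1/\<delta>) * norm t ^ m)"
      by (intro mult_mono) (simp_all add: e1 invb qpb qpb' cr0 w0 d0 norm_power less_imp_le)
    also have "\<dots> = g x" by (simp add: g_def x)
    finally show ?thesis .
  qed
  have g0: "0 \<le> g x" for x using cr0 w0 d0 by (cases x) (auto simp: g_def)
  have geo: "((\<lambda>m. norm t ^ m) has_sum (1 / (1 - norm t))) UNIV"
    by (rule sums_nonneg_imp_has_sum) (use t1 in \<open>auto intro: geometric_sums\<close>)
  have grow: "((\<lambda>m. g (k,m)) has_sum (cr k * w^k / \<delta> * (1 / (1 - norm t) / \<delta>))) UNIV" for k
  proof -
    have "((\<lambda>m. norm t ^ m / \<delta>) has_sum (1 / (1 - norm t) / \<delta>)) UNIV"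
      using has_sum_cmult_right[OF geo, of "1/\<delta>"] by (simp add: field_simps)
    from has_sum_cmult_right[OF this, of "cr k * w^k / \<delta>"] show ?thesis by (simp add: g_def)
  qed
  have gcol: "(\<lambda>k. cr k * w^k / \<delta> * (1 / (1 - norm t) / \<delta>)) summable_on UNIV"
  proof -
    have "summable (\<lambda>k. cr k * w^k * (1 / \<delta> * (1 / (1 - norm t) / \<delta>)))"
      by (rule summable_mult2[OF crsum])
    hence "summable (\<lambda>k. cr k * w^k / \<delta> * (1 / (1 - norm t) / \<delta>))" by (simp add: field_simps)
    moreover have "0 \<le> cr k * w^k / \<delta> * (1 / (1 - norm t) / \<delta>)" for k
      using cr0 w0 d0 t1 by simp
    ultimately show ?thesis by (subst summable_on_UNIV_nonneg_real_iff) auto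
  qed
  have "g summable_on Sigma UNIV (\<lambda>_. UNIV)"
    by (rule summable_on_SigmaI[OF grow gcol]) (use g0 in auto)
  hence gsum: "g summable_on UNIV" by simp
  have "(\<lambda>x. norm (f x)) summable_on UNIV"
    by (rule Infinite_Sum.abs_summable_on_comparison_test'[OF gsum fbound])
  hence "f summable_on UNIV" using summable_on_iff_abs_summable_on_complex by blast
  then obtain S where fS: "(f has_sum S) UNIV" by (auto simp: summable_on_def)
  (* row sums via q-binomial theorem *)
  have frow: "((\<lambda>m. f (k,m)) has_sum (C * G k)) UNIV" for k
  proof -
    define h where "h m = qpoch (of_real (p * q^k)) (of_real q) m / qpoch (of_real q) (of_real q) m * t^m" for m
    have a0: "0 \<le> p * q^k" using p0 q0 by simp
    have "q^k \<le> 1" using q0 q1 by (simp add: power_le_one)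
    hence a1: "p * q^k \<le> 1" using p0 p1 q0 by (intro mult_le_one) auto
    have hs: "h sums (qpoch_inf (of_real (p * q^k) * t) (of_real q) / qpoch_inf t (of_real q))"
      unfolding h_def by (rule qbinomial[OF q0 q1 a0 a1 t1])
    have "summable (\<lambda>m. norm (h m))"
    proof (rule summable_comparison_test'[where N=0])
      show "summable (\<lambda>m. 1/\<delta> * norm t ^ m)" using t1 by (intro summable_mult summable_geometric) auto
      show "norm (norm (h m)) \<le> 1/\<delta> * norm t ^ m" for m
      proof -
        have "norm (h m) = norm (qpoch (of_real (p * q^k)) (of_real q) m) * norm (inverse (QQ m)) * norm t ^ m"
          by (simp add: h_def QQ_def norm_mult norm_divide norm_power divide_inverse norm_inverse)
        also have "\<dots> \<le> 1 * (1/\<delta>) * norm t ^ m"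
          by (intro mult_mono) (simp_all add: qpb qpb' invb d0 less_imp_le)
        finally show ?thesis by simp
      qed
    qed
    from norm_summable_imp_has_sum[OF this hs]
    have "((\<lambda>m. (of_real (cr k) * (z*t)^k * inverse (QQ k)) * h m) has_sum
           (of_real (cr k) * (z*t)^k * inverse (QQ k)) * (qpoch_inf (of_real (p * q^k) * t) (of_real q) / qpoch_inf t (of_real q))) UNIV"
      by (rule has_sum_cmult_right)
    moreover have "(\<lambda>m. (of_real (cr k) * (z*t)^k * inverse (QQ k)) * h m) = (\<lambda>m. f (k,m))"
      by (simp add: f_def h_def QQ_def divide_inverse mult.assoc)
    moreover have "(of_real (cr k) * (z*t)^k * inverse (QQ k)) * (qpoch_inf (of_real (p * q^k) * t) (of_real q) / qpoch_inf t (of_real q)) = C * G k"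
    proof -
      have e: "complex_of_real (p * q^k) * t = (of_real p * t) * of_real q ^ k" by simp
      have "qpoch_inf (of_real (p * q^k) * t) (of_real q) = qpoch_inf (of_real p * t) (of_real q) / qpoch (of_real p * t) (of_real q) k"
        unfolding e by (rule qpoch_shift[OF q0 q1 npt])
      thus ?thesis using PTnz[of k] QQnz[of k] I2
        by (simp add: C_def G_def cr_def QQ_def field_simps)
    qed
    ultimately show ?thesis by simp
  qed
  have "((\<lambda>k. C * G k) has_sum S) UNIV"
    by (rule has_sum_SigmaD[where B="\<lambda>_. UNIV"]) (use fS frow in auto)
  hence "(G has_sum (S / C)) UNIV" using Cnz by (simp add: has_sum_cmult_right_iff)
  hence Gs: "G sums (S / C)" by (rule has_sum_imp_sums)
  define hh where "hh = (\<lambda>(n::nat, k::nat). (k, n - k))"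
  have bij: "bij_betw hh (Sigma UNIV (\<lambda>n. {..n})) UNIV"
    by (rule bij_betw_byWitness[where f'="\<lambda>(k,m). (k+m, k)"]) (auto simp: hh_def)
  have "((\<lambda>x. f (hh x)) has_sum S) (Sigma UNIV (\<lambda>n. {..n}))"
    using fS by (simp add: has_sum_reindex_bij_betw[OF bij])
  hence diag: "((\<lambda>n. \<Sum>k\<le>n. f (k, n - k)) has_sum S) UNIV"
    by (rule has_sum_SigmaD) (auto simp: hh_def)
  have trm: "qpoch (of_real p) (of_real q) n / qpoch (of_real q) (of_real q) n
          * (\<Sum>k=0..n. qbinom (of_real q) n k * of_real (q powr (real k ^ 2 + real k / 2))
               / qpoch (of_real p) (of_real q) k * z ^ k) * t ^ n = (\<Sum>k\<le>n. f (k, n - k))" for n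
  proof -
    have "qpoch (of_real p) (of_real q) n / qpoch (of_real q) (of_real q) n
          * (qbinom (of_real q) n k * of_real (q powr (real k ^ 2 + real k / 2))
               / qpoch (of_real p) (of_real q) k * z ^ k) * t ^ n = f (k, n - k)" if kn: "k \<le> n" for k
    proof -
      have n: "n = k + (n - k)" using kn by simp
      have Pn: "qpoch (of_real p) (of_real q) n = qpoch (of_real p) (of_real q) k * qpoch (of_real (p * q^k)) (of_real q) (n - k)"
        by (subst n, subst qpoch_add) simp
      have tn: "t ^ n = t^k * t^(n-k)" by (subst n, subst power_add) simp
      have QQn: "qbinom (of_real q) n k = QQ n / (QQ k * QQ (n - k))" by (simp add: qbinom_def QQ_def)
      show ?thesis
        unfolding Pn tn QQn using Pnz[of k] QQnz[of n] QQnz[of k] QQnz[of "n-k"]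
        by (simp add: f_def cr_def QQ_def field_simps power_mult_distrib)
    qed
    thus ?thesis
      by (simp add: sum_distrib_left sum_distrib_right atMost_atLeast0)
  qed
  have "(\<lambda>n. qpoch (of_real p) (of_real q) n / qpoch (of_real q) (of_real q) n
          * (\<Sum>k=0..n. qbinom (of_real q) n k * of_real (q powr (real k ^ 2 + real k / 2))
               / qpoch (of_real p) (of_real q) k * z ^ k) * t ^ n) sums S"
    unfolding trm by (rule has_sum_imp_sums[OF diag])
  moreover have "S = C * (\<Sum>n. G n)"
  proof -
    have "(\<Sum>n. G n) = S / C" using sums_unique[OF Gs] by simp
    thus ?thesis using Cnz by simp
  qed
  ultimately show ?thesis using sums_summable[OF Gs] unfolding G_def C_def by simp
qed

end
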